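(* Assume (A1)–(A2). Let $\eta>0$, $x_t\in\mathcal X$, $y_t:=q(x_t)$, and let $g_t\in\mathbb R^d$ be any vector with $\|g_t\|_2\le\hat G_F$ for some $\hat G_F>0$. Set $\tilde g_t:=J_q(x_t)^{-\top}g_t$ and define $$y_{t+1}=\arg\min_{y\in\mathcal Y}\Big\{\tilde g_t^\top(y-y_t)+\tfrac1\eta D_R(y\|y_t)\Big\},\qquad x_{t+1}=\arg\min_{x\in\mathcal X}\Big\{g_t^\top(x-x_t)+\tfrac1{2\eta}\|x-x_t\|_2^2\Big\}.$$ Then $$\|y_{t+1}-q(x_{t+1})\|_2\le G^5\big(5\hat G_F^2+\hat G_F^3\eta\big)\eta^2.$$
   Context: $\mathcal X,\mathcal Y\subset\mathbb R^d$ are convex compact sets and $q:\mathcal X\to\mathcal Y$ is a smooth bijection with Jacobian $J_q(x)$; $M^{-\top}$ denotes the inverse transpose. Bregman divergence $D_R(x\|y)=R(x)-R(y)-\nabla R(y)^\top(x-y)$. (A1) There is a twice continuously differentiable, strictly convex $R:\mathcal Y\to\mathbb R$ such that $[\nabla^2R(q(x))]^{-1}=J_q(x)J_q(x)^\top$ for all $x\in\mathcal X$. (A2) There is $G>1$ such that: $q$ is $G$-Lipschitz on $\mathcal X$; the first and second derivatives of $q^{-1}$ are bounded by $G$; $R$ is $1$-strongly convex (Euclidean norm) and smooth with first and third derivatives bounded by $G$; for every $z\in\mathcal Y$ the map $w\mapsto D_R(z\|w)$ is $G$-Lipschitz. *)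

theory Defs
  imports "HOL-Analysis.Analysis"
begin

definition strict_convex_on :: "'a::real_vector set \<Rightarrow> ('a \<Rightarrow> real) \<Rightarrow> bool" where
  "strict_convex_on S f \<longleftrightarrow>
     (\<forall>x\<in>S. \<forall>y\<in>S. x \<noteq> y \<longrightarrow> (\<forall>u::real. 0 < u \<and> u < 1 \<longrightarrow>
        f (u *\<^sub>R x + (1 - u) *\<^sub>R y) < u * f x + (1 - u) * f y))"

definition bregman :: "('a::real_inner \<Rightarrow> real) \<Rightarrow> ('a \<Rightarrow> 'a) \<Rightarrow> 'a \<Rightarrow> 'a \<Rightarrow> real" where
  "bregman R gR x y = R x - R y - gR y \<bullet> (x - y)"

definition strongly_convex_1_on :: "'a::real_inner set \<Rightarrow> ('a \<Rightarrow> real) \<Rightarrow> bool" where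
  "strongly_convex_1_on S f \<longleftrightarrow>
     (\<forall>x\<in>S. \<forall>y\<in>S. \<forall>u::real. 0 \<le> u \<and> u \<le> 1 \<longrightarrow>
        f (u *\<^sub>R x + (1 - u) *\<^sub>R y) \<le> u * f x + (1 - u) * f y - u * (1 - u) / 2 * (norm (x - y))\<^sup>2)"

end

theory Submission
  imports Defs
begin



lemma dir_deriv_le:
  fixes f :: "'a::real_normed_vector \<Rightarrow> real"
  assumes fd: "(f has_derivative f') (at a within S)" and cS: "convex S" and a: "a \<in> S" and b: "b \<in> S"
    and le: "\<And>u. 0 < u \<Longrightarrow> u < 1 \<Longrightarrow> f (a + u *\<^sub>R (b - a)) - f a \<le> u * c + u * u * K"
  shows "f' (b - a) \<le> c"
proof -
  define \<gamma> where "\<gamma> = (\<lambda>u::real. a + u *\<^sub>R (b - a))"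
  have sub: "\<gamma> ` {0..1} \<subseteq> S"
  proof
    fix z assume "z \<in> \<gamma> ` {0..1}"
    then obtain u where u: "u \<in> {0..1}" "z = \<gamma> u" by auto
    have "z = (1 - u) *\<^sub>R a + u *\<^sub>R b" using u by (simp add: \<gamma>_def algebra_simps)
    then show "z \<in> S" using u cS a b by (auto intro: convexD_alt)
  qed
  have lin: "linear f'" using fd by (rule has_derivative_linear)
  have g: "(\<gamma> has_derivative (\<lambda>u. u *\<^sub>R (b - a))) (at 0 within {0..1})"
    unfolding \<gamma>_def by (auto intro!: derivative_eq_intros)
  have f2: "(f has_derivative f') (at (\<gamma> 0) within (\<gamma> ` {0..1}))"
    using has_derivative_subset[OF fd sub] by (simp add: \<gamma>_def)
  have "((\<lambda>u. f (\<gamma> u)) has_derivative (\<lambda>u. f' (u *\<^sub>R (b - a)))) (at 0 within {0..1})"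
    using has_derivative_in_compose[OF g f2] by simp
  moreover have "(\<lambda>u. f' (u *\<^sub>R (b - a))) = (*) (f' (b - a))"
    using lin by (intro ext) (simp add: linear_scale mult.commute)
  ultimately have "((\<lambda>u. f (\<gamma> u)) has_field_derivative f' (b - a)) (at 0 within {0..1})"
    by (simp add: has_field_derivative_def)
  then have lim: "((\<lambda>u. (f (\<gamma> u) - f (\<gamma> 0)) / (u - 0)) \<longlongrightarrow> f' (b - a)) (at_right 0)"
  proof -
    have "((\<lambda>u. (f (\<gamma> u) - f (\<gamma> 0)) / (u - 0)) \<longlongrightarrow> f' (b - a)) (at 0 within {0..1})"
      using \<open>((\<lambda>u. f (\<gamma> u)) has_field_derivative f' (b - a)) (at 0 within {0..1})\<close>
      unfolding has_field_derivative_iff .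
    moreover have "at (0::real) within {0..1} = at_right 0" by (rule at_within_Icc_at_right) simp
    ultimately show ?thesis by simp
  qed
  have lim2: "((\<lambda>u. c + u * K) \<longlongrightarrow> c) (at_right (0::real))"
    by (auto intro!: tendsto_eq_intros)
  have ev: "eventually (\<lambda>u. (f (\<gamma> u) - f (\<gamma> 0)) / (u - 0) \<le> c + u * K) (at_right 0)"
    unfolding eventually_at_right_field
  proof (intro exI[of _ 1] conjI allI impI)
    fix u :: real assume "0 < u" "u < 1"
    then have "f (\<gamma> u) - f (\<gamma> 0) \<le> u * (c + u * K)" using le[of u] by (simp add: \<gamma>_def algebra_simps)
    then show "(f (\<gamma> u) - f (\<gamma> 0)) / (u - 0) \<le> c + u * K" using \<open>0 < u\<close> by (simp add: divide_le_eq mult.commute)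
  qed simp
  show ?thesis using tendsto_le[OF trivial_limit_at_right_real lim2 lim ev] .
qed

lemma seg_in:
  assumes "convex S" "x \<in> S" "y \<in> S" "u \<in> {0..1::real}"
  shows "x + u *\<^sub>R (y - x) \<in> S"
proof -
  have "x + u *\<^sub>R (y - x) = (1 - u) *\<^sub>R x + u *\<^sub>R y" by (simp add: algebra_simps)
  then show ?thesis using assms by (auto intro: convexD_alt)
qed

lemma taylor2:
  fixes f :: "'a::real_normed_vector \<Rightarrow> 'b::real_normed_vector"
  assumes cS: "convex S"
    and derf: "\<And>z. z \<in> S \<Longrightarrow> (f has_derivative Df z) (at z within S)"
    and lip: "\<And>z h. z \<in> S \<Longrightarrow> norm (Df z h - Df x h) \<le> L * norm (z - x) * norm h"
    and x: "x \<in> S" and y: "y \<in> S"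
  shows "norm (f y - f x - Df x (y - x)) \<le> L / 2 * (norm (y - x))\<^sup>2"
proof -
  let ?p = "\<lambda>u. x + u *\<^sub>R (y - x)"
  define h where "h = (\<lambda>u. f (?p u) - u *\<^sub>R Df x (y - x))"
  define \<phi> where "\<phi> = (\<lambda>u::real. L / 2 * u\<^sup>2 * (norm (y - x))\<^sup>2)"
  have *: "?p u \<in> S" if "u \<in> {0..1}" for u using seg_in[OF cS x y that] .
  have "\<And>z. z \<in> ?p ` {0..1} \<Longrightarrow> (f has_derivative Df z) (at z within ?p ` {0..1})"
    by (auto intro: * has_derivative_subset [OF derf])
  then have "continuous_on (?p ` {0..1}) f"
    unfolding continuous_on_eq_continuous_within
    by (meson has_derivative_continuous)
  with * have "continuous_on {0 .. 1} (f \<circ> ?p)"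
    by (intro continuous_intros)+
  then have 1: "continuous_on {0 .. 1} h"
    unfolding h_def o_def by (intro continuous_intros)
  have 2: "(h has_vector_derivative (Df (?p u) (y - x) - Df x (y - x))) (at u)" if u: "0 < u" "u < 1" for u
  proof -
    have u': "u \<in> {0<..<1}" using u by simp
    interpret linear "(Df (?p u))"
      using u by (auto intro!: has_derivative_linear derf *)
    have "(f \<circ> ?p has_derivative (Df (?p u)) \<circ> (\<lambda>u. 0 + u *\<^sub>R (y - x))) (at u within box 0 1)"
      by (intro derivative_intros has_derivative_subset [OF derf]) (use u * in auto)
    hence "((f \<circ> ?p) has_vector_derivative Df (?p u) (y - x)) (at u)"
      by (simp add: at_within_open[OF u' open_greaterThanLessThan] scaleR has_vector_derivative_def o_def)
    moreover have "((\<lambda>u. u *\<^sub>R Df x (y - x)) has_vector_derivative Df x (y - x)) (at u)"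
      by (auto intro!: derivative_eq_intros simp: has_vector_derivative_def)
    ultimately show ?thesis unfolding h_def o_def by (intro derivative_intros) auto
  qed
  have 3: "continuous_on {0..1} \<phi>" unfolding \<phi>_def by (intro continuous_intros)
  have 4: "(\<phi> has_vector_derivative L * u * (norm (y - x))\<^sup>2) (at u)" for u
    unfolding \<phi>_def has_vector_derivative_def
    by (auto intro!: derivative_eq_intros simp: power2_eq_square)
  have 5: "norm (Df (?p u) (y - x) - Df x (y - x)) \<le> L * u * (norm (y - x))\<^sup>2" if u: "0 < u" "u < 1" for u
  proof -
    have "norm (Df (?p u) (y - x) - Df x (y - x)) \<le> L * norm (?p u - x) * norm (y - x)"
      using lip[OF *] u by auto
    also have "norm (?p u - x) = u * norm (y - x)" using u by simp
    finally show ?thesis by (simp add: power2_eq_square mult.assoc)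
  qed
  have "norm (h 1 - h 0) \<le> \<phi> 1 - \<phi> 0"
    by (rule differentiable_bound_general[OF zero_less_one 1 3 2 4 5])
  then show ?thesis by (simp add: h_def \<phi>_def algebra_simps)
qed

lemma mvt_bound:
  fixes f :: "'a::{real_normed_vector,perfect_space} \<Rightarrow> 'b::real_normed_vector"
  assumes cS: "convex S"
    and derf: "\<And>z. z \<in> S \<Longrightarrow> (f has_derivative Df z) (at z within S)"
    and bd: "\<And>z h. z \<in> S \<Longrightarrow> norm (Df z h) \<le> B * norm h"
    and x: "x \<in> S" and y: "y \<in> S"
  shows "norm (f y - f x) \<le> B * norm (y - x)"
proof (rule differentiable_bound[OF cS derf _ y x])
  fix z assume "z \<in> S"
  then show "onorm (Df z) \<le> B" by (intro onorm_le bd)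
qed

lemma deriv_unique_dir:
  fixes f :: "'a::real_normed_vector \<Rightarrow> 'b::real_inner"
  assumes d1: "(f has_derivative L1) (at a within S)" and d2: "(f has_derivative L2) (at a within S)"
    and cS: "convex S" and a: "a \<in> S" and b: "b \<in> S"
  shows "L1 (b - a) = L2 (b - a)"
proof -
  have key: "e \<bullet> L1 (b - a) - e \<bullet> L2 (b - a) \<le> 0" for e
  proof -
    have "((\<lambda>x. e \<bullet> f x - e \<bullet> f x) has_derivative (\<lambda>h. e \<bullet> L1 h - e \<bullet> L2 h)) (at a within S)"
      by (intro derivative_intros d1 d2)
    from dir_deriv_le[OF this cS a b, of 0 0] show ?thesis by simp
  qed
  have "(L1 (b - a) - L2 (b - a)) \<bullet> (L1 (b - a) - L2 (b - a)) \<le> 0"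
    using key[of "L1 (b - a) - L2 (b - a)"] by (simp add: inner_diff_left inner_diff_right inner_commute)
  then have "L1 (b - a) - L2 (b - a) = 0" by (metis inner_gt_zero_iff not_le)
  then show ?thesis by simp
qed

lemma grad_ineq:
  fixes R :: "'a::real_inner \<Rightarrow> real"
  assumes sc: "strongly_convex_1_on S R" and cS: "convex S"
    and d: "(R has_derivative (\<lambda>h. gx \<bullet> h)) (at x within S)" and x: "x \<in> S" and y: "y \<in> S"
  shows "R x + gx \<bullet> (y - x) + (norm (y - x))\<^sup>2 / 2 \<le> R y"
proof -
  let ?c = "R y - R x - (norm (y - x))\<^sup>2 / 2"
  have "gx \<bullet> (y - x) \<le> ?c"
  proof (rule dir_deriv_le[OF d cS x y, where K = "(norm (y - x))\<^sup>2 / 2"])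
    fix u :: real assume u: "0 < u" "u < 1"
    have "R (u *\<^sub>R y + (1 - u) *\<^sub>R x) \<le> u * R y + (1 - u) * R x - u * (1 - u) / 2 * (norm (y - x))\<^sup>2"
      using sc y x u unfolding strongly_convex_1_on_def by auto
    moreover have "u *\<^sub>R y + (1 - u) *\<^sub>R x = x + u *\<^sub>R (y - x)" by (simp add: algebra_simps)
    moreover have "u * ?c + u * u * ((norm (y - x))\<^sup>2 / 2) = u * R y + (1 - u) * R x - u * (1 - u) / 2 * (norm (y - x))\<^sup>2 - R x"
      by (simp add: field_simps)
    ultimately show "R (x + u *\<^sub>R (y - x)) - R x \<le> u * ?c + u * u * ((norm (y - x))\<^sup>2 / 2)"
      by simp
  qed
  then show ?thesis by simp
qed

lemma lim_elem:
  fixes K c :: real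
  assumes K: "K \<ge> 0" and h: "\<And>u. 0 < u \<Longrightarrow> u < 1 \<Longrightarrow> (1 - u) * K \<le> c"
  shows "K \<le> c"
proof (rule ccontr)
  assume "\<not> K \<le> c"
  then have c: "c < K" by simp
  define u where "u = (K - c) / (2 * K)"
  have "(1 - 1/2) * K \<le> c" by (rule h) auto
  then have Kc: "K / 2 \<le> c" by simp
  then have K0: "K > 0" using c K by linarith
  have "0 < u" "u < 1" using c K0 Kc by (auto simp: u_def field_simps)
  then have "(1 - u) * K \<le> c" by (rule h)
  moreover have "(1 - u) * K = (K + c) / 2" using K0 by (simp add: u_def field_simps)
  ultimately show False using c by simp
qed


lemma inv_facts: fixes A :: "real^'n^'n" assumes "invertible A"
  shows "A ** matrix_inv A = mat 1" "matrix_inv A ** A = mat 1"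
  using someI_ex[OF assms[unfolded invertible_def]] unfolding matrix_inv_def by auto

lemma A1_facts: fixes H M :: "real^'n^'n" assumes "invertible H" "matrix_inv H = M ** transpose M"
  shows "transpose M ** H ** M = mat 1" "invertible (transpose M)"
proof -
  have "H ** (M ** transpose M) = mat 1" using inv_facts(1)[OF assms(1)] assms(2) by simp
  then have "(H ** M) ** transpose M = mat 1" by (simp add: matrix_mul_assoc)
  then have *: "transpose M ** (H ** M) = mat 1" using matrix_left_right_inverse by blast
  then show "transpose M ** H ** M = mat 1" by (simp add: matrix_mul_assoc)
  show "invertible (transpose M)" using * invertible_right_inverse by blast
qed

lemma inner_mat: fixes A :: "real^'n^'m" shows "(A *v x) \<bullet> y = x \<bullet> (transpose A *v y)"
  by (metis dot_lmul_matrix inner_commute transpose_matrix_vector)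

lemma bl_mv: "bounded_linear (\<lambda>A::real^'n^'m. A *v h)"
proof -
  have "linear (\<lambda>A::real^'n^'m. A *v h)"
    by (rule linearI) (simp_all add: vec_eq_iff matrix_vector_mult_def sum_distrib_left mult.assoc distrib_right sum.distrib)
  then show ?thesis using linear_conv_bounded_linear by blast
qed

lemma lim_lin:
  fixes A B c :: real
  assumes h: "\<And>u. 0 < u \<Longrightarrow> u < 1 \<Longrightarrow> c \<le> A + u * B"
  shows "c \<le> A"
proof (rule ccontr)
  assume "\<not> c \<le> A"
  then have cA: "A < c" by simp
  show False
  proof (cases "B \<le> 0")
    case True
    have "c \<le> A + (1/2) * B" by (rule h) auto
    then show False using True cA by linarith
  next
    case False
    define u where "u = min (1/2) ((c - A) / (2 * B))"
    have u: "0 < u" "u < 1" using False cA by (auto simp: u_def)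
    have "u * B \<le> ((c - A) / (2 * B)) * B" using False by (intro mult_right_mono) (auto simp: u_def)
    also have "\<dots> = (c - A) / 2" using False by simp
    finally have "u * B \<le> (c - A) / 2" .
    then have "A + u * B < c" using cA by (simp add: field_simps)
    with h[OF u] show False by linarith
  qed
qed

lemma sq_le_cancel:
  fixes x b :: real
  assumes "x \<ge> 0" "b \<ge> 0" "x * x \<le> x * b" shows "x \<le> b"
proof (cases "x = 0")
  case True then show ?thesis using assms by simp
next
  case False then have "x > 0" using assms by simp
  then show ?thesis using assms(3) by (simp add: mult_le_cancel_left_pos)
qed


theorem propositionA1:
  fixes X Y :: "(real^'n) set"
    and q :: "real^'n \<Rightarrow> real^'n"
    and J :: "real^'n \<Rightarrow> real^'n^'n"
    and R :: "real^'n \<Rightarrow> real"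
    and gR :: "real^'n \<Rightarrow> real^'n"
    and HR :: "real^'n \<Rightarrow> real^'n^'n"
    and TR :: "real^'n \<Rightarrow> real^'n \<Rightarrow> real^'n^'n"
    and Jinv :: "real^'n \<Rightarrow> real^'n^'n"
    and D2inv :: "real^'n \<Rightarrow> real^'n \<Rightarrow> real^'n^'n"
    and G GF \<eta> :: real
    and xt yt x1 y1 g :: "real^'n"
  assumes X: "convex X" "compact X"
    and Y: "convex Y" "compact Y"
    \<comment> \<open>q : X \<rightarrow> Y smooth bijection with Jacobian J\<close>
    and q_bij: "bij_betw q X Y"
    and q_deriv: "\<And>x. x \<in> X \<Longrightarrow> (q has_derivative (\<lambda>h. J x *v h)) (at x within X)"
    and J_cont: "continuous_on X J"
    \<comment> \<open>(A1): R twice continuously differentiable, strictly convex, Hessian condition\<close>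
    and R_grad: "\<And>y. y \<in> Y \<Longrightarrow> (R has_derivative (\<lambda>h. gR y \<bullet> h)) (at y within Y)"
    and R_hess: "\<And>y. y \<in> Y \<Longrightarrow> (gR has_derivative (\<lambda>h. HR y *v h)) (at y within Y)"
    and HR_cont: "continuous_on Y HR"
    and R_strict: "strict_convex_on Y R"
    and A1: "\<And>x. x \<in> X \<Longrightarrow> invertible (HR (q x)) \<and>
                 matrix_inv (HR (q x)) = J x ** transpose (J x)"
    \<comment> \<open>(A2)\<close>
    and G_gt: "G > 1"
    and q_lip: "G-lipschitz_on X q"
    and qinv_d1: "\<And>y. y \<in> Y \<Longrightarrow> (inv_into X q has_derivative (\<lambda>h. Jinv y *v h)) (at y within Y)"
    and qinv_d1_bd: "\<And>y h. y \<in> Y \<Longrightarrow> norm (Jinv y *v h) \<le> G * norm h"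
    and qinv_d2: "\<And>y. y \<in> Y \<Longrightarrow> (Jinv has_derivative D2inv y) (at y within Y)"
    and qinv_d2_bd: "\<And>y h k. y \<in> Y \<Longrightarrow> norm (D2inv y h *v k) \<le> G * norm h * norm k"
    and R_strong: "strongly_convex_1_on Y R"
    and R_d1_bd: "\<And>y. y \<in> Y \<Longrightarrow> norm (gR y) \<le> G"
    and R_d3: "\<And>y. y \<in> Y \<Longrightarrow> (HR has_derivative TR y) (at y within Y)"
    and R_d3_bd: "\<And>y h k l. y \<in> Y \<Longrightarrow> \<bar>(TR y h *v k) \<bullet> l\<bar> \<le> G * norm h * norm k * norm l"
    and D_lip: "\<And>z. z \<in> Y \<Longrightarrow> G-lipschitz_on Y (\<lambda>w. bregman R gR z w)"
    \<comment> \<open>the step\<close>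
    and eta: "\<eta> > 0"
    and xt: "xt \<in> X"
    and yt: "yt = q xt"
    and GF: "GF > 0"
    and g: "norm g \<le> GF"
    and y1: "y1 \<in> Y"
    and y1_min: "\<And>y. y \<in> Y \<Longrightarrow>
        (matrix_inv (transpose (J xt)) *v g) \<bullet> (y1 - yt) + (1 / \<eta>) * bregman R gR y1 yt
        \<le> (matrix_inv (transpose (J xt)) *v g) \<bullet> (y - yt) + (1 / \<eta>) * bregman R gR y yt"
    and x1: "x1 \<in> X"
    and x1_min: "\<And>x. x \<in> X \<Longrightarrow>
        g \<bullet> (x1 - xt) + (1 / (2 * \<eta>)) * (norm (x1 - xt))\<^sup>2
        \<le> g \<bullet> (x - xt) + (1 / (2 * \<eta>)) * (norm (x - xt))\<^sup>2"
  shows "norm (y1 - q x1) \<le> G ^ 5 * (5 * GF\<^sup>2 + GF ^ 3 * \<eta>) * \<eta>\<^sup>2"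

proof -
  let ?qi = "inv_into X q"
  have inj: "inj_on q X" using q_bij by (simp add: bij_betw_def)
  have qiq: "\<And>x. x \<in> X \<Longrightarrow> ?qi (q x) = x" using inj by (simp add: inv_into_f_f)
  have qqi: "\<And>y. y \<in> Y \<Longrightarrow> q (?qi y) = y" using q_bij by (simp add: bij_betw_inv_into_right)
  have qiY: "\<And>y. y \<in> Y \<Longrightarrow> ?qi y \<in> X" using q_bij by (metis bij_betw_imp_surj_on inv_into_into)
  have qX: "\<And>x. x \<in> X \<Longrightarrow> q x \<in> Y" using q_bij bij_betwE by blast
  define yh where "yh = q x1"
  have yh: "yh \<in> Y" using qX x1 by (simp add: yh_def)
  have ytY: "yt \<in> Y" using qX xt yt by simp
  define d where "d = y1 - yh"
  define Dx where "Dx = x1 - xt"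
  define W where "W = \<eta> *\<^sub>R g + Dx"
  define a where "a = \<eta> * GF * G"
  define P where "P = Jinv yh"
  define ginv where "ginv = matrix_inv (transpose (J xt)) *v g"
  have G0: "G > 0" using G_gt by simp
  have x1yh: "?qi yh = x1" using qiq x1 by (simp add: yh_def)
  have xtyt: "?qi yt = xt" using qiq xt yt by simp
  have FOx: "0 \<le> W \<bullet> (x - x1)" if x: "x \<in> X" for x
  proof -
    define w where "w = x - x1"
    have "0 \<le> 2 * (W \<bullet> w) + u * (w \<bullet> w)" if u: "0 < u" "u < 1" for u
    proof -
      have z: "x1 + u *\<^sub>R (x - x1) \<in> X" using seg_in[OF X(1) x1 x] u by simp
      have m: "g \<bullet> Dx + (1 / (2 * \<eta>)) * (norm Dx)\<^sup>2
        \<le> g \<bullet> (Dx + u *\<^sub>R w) + (1 / (2 * \<eta>)) * (norm (Dx + u *\<^sub>R w))\<^sup>2"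
        using x1_min[OF z] by (simp add: Dx_def w_def algebra_simps)
      have e1: "(norm (Dx + u *\<^sub>R w))\<^sup>2 = (norm Dx)\<^sup>2 + 2 * u * (Dx \<bullet> w) + u\<^sup>2 * (w \<bullet> w)"
        unfolding power2_norm_eq_inner by (simp add: inner_add_left inner_add_right inner_commute algebra_simps power2_eq_square)
      have e2: "g \<bullet> (Dx + u *\<^sub>R w) = g \<bullet> Dx + u * (g \<bullet> w)" by (simp add: inner_add_right)
      have "0 \<le> u * (g \<bullet> w) + (1 / (2 * \<eta>)) * (2 * u * (Dx \<bullet> w) + u\<^sup>2 * (w \<bullet> w))"
      proof -
        have "(1 / (2 * \<eta>)) * ((norm Dx)\<^sup>2 + 2 * u * (Dx \<bullet> w) + u\<^sup>2 * (w \<bullet> w))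
          = (1 / (2 * \<eta>)) * (norm Dx)\<^sup>2 + (1 / (2 * \<eta>)) * (2 * u * (Dx \<bullet> w) + u\<^sup>2 * (w \<bullet> w))"
          by (simp add: algebra_simps)
        then show ?thesis using m[unfolded e1 e2] by linarith
      qed
      then have "0 \<le> (2 * \<eta> / u) * (u * (g \<bullet> w) + (1 / (2 * \<eta>)) * (2 * u * (Dx \<bullet> w) + u\<^sup>2 * (w \<bullet> w)))"
        using u eta by simp
      also have "\<dots> = 2 * (\<eta> * (g \<bullet> w) + Dx \<bullet> w) + u * (w \<bullet> w)"
        using u eta by (simp add: field_simps power2_eq_square)
      also have "\<eta> * (g \<bullet> w) + Dx \<bullet> w = W \<bullet> w" by (simp add: W_def inner_add_left)
      finally show ?thesis .
    qed
    then have "0 \<le> 2 * (W \<bullet> w)" by (rule lim_lin)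
    then show ?thesis by (simp add: w_def)
  qed
  have WDx: "W \<bullet> Dx \<le> 0" using FOx[OF xt] by (simp add: Dx_def inner_diff_right)
  have Wn: "norm W \<le> \<eta> * GF"
  proof -
    have "(norm W)\<^sup>2 = W \<bullet> W" by (simp add: power2_norm_eq_inner)
    also have "\<dots> = W \<bullet> (\<eta> *\<^sub>R g + Dx)" by (rule arg_cong[where f="\<lambda>v. W \<bullet> v"]) (rule W_def)
    also have "\<dots> = W \<bullet> (\<eta> *\<^sub>R g) + W \<bullet> Dx" by (simp add: inner_add_right)
    also have "\<dots> \<le> norm W * (\<eta> * norm g)"
    proof -
      have ne: "norm (\<eta> *\<^sub>R g) = \<eta> * norm g" using eta by simp
      have "W \<bullet> (\<eta> *\<^sub>R g) \<le> norm W * (\<eta> * norm g)" using norm_cauchy_schwarz[of W "\<eta> *\<^sub>R g"] unfolding ne .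
      then show ?thesis using WDx by linarith
    qed
    finally have sq: "norm W * norm W \<le> norm W * (\<eta> * norm g)" by (simp add: power2_eq_square)
    have "norm W \<le> \<eta> * norm g" using sq_le_cancel[OF norm_ge_zero _ sq] eta by simp
    also have "\<dots> \<le> \<eta> * GF" using g eta by simp
    finally show ?thesis .
  qed
  have Dxn: "norm Dx \<le> \<eta> * GF"
  proof -
    have "(norm Dx)\<^sup>2 = Dx \<bullet> W - \<eta> * (Dx \<bullet> g)" unfolding power2_norm_eq_inner W_def by (simp add: inner_add_right)
    also have "\<dots> \<le> norm Dx * (\<eta> * norm g)"
    proof -
      have "- (Dx \<bullet> g) \<le> norm Dx * norm g" using norm_cauchy_schwarz[of "-Dx" g] by simp
      then have "\<eta> * (- (Dx \<bullet> g)) \<le> \<eta> * (norm Dx * norm g)" using eta by (intro mult_left_mono) auto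
      moreover have "Dx \<bullet> W \<le> 0" using WDx by (simp add: inner_commute)
      ultimately show ?thesis by (simp add: algebra_simps)
    qed
    finally have sq: "norm Dx * norm Dx \<le> norm Dx * (\<eta> * norm g)" by (simp add: power2_eq_square)
    have "norm Dx \<le> \<eta> * norm g" using sq_le_cancel[OF norm_ge_zero _ sq] eta by simp
    also have "\<dots> \<le> \<eta> * GF" using g eta by simp
    finally show ?thesis .
  qed
  define e0 where "e0 = norm (yt - yh)"
  have e0a: "e0 \<le> a"
  proof -
    have "e0 = dist (q xt) (q x1)" by (simp add: e0_def yt yh_def dist_norm)
    also have "\<dots> \<le> G * dist xt x1" using lipschitz_onD[OF q_lip xt x1] .
    also have "\<dots> = G * norm Dx" by (simp add: Dx_def dist_norm norm_minus_commute)
    also have "\<dots> \<le> G * (\<eta> * GF)" using Dxn G0 by simp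
    finally show ?thesis by (simp add: a_def mult_ac)
  qed
  have e00: "e0 \<ge> 0" by (simp add: e0_def)
  have tang: "J x *v (Jinv (q x) *v (y - q x)) = y - q x" if x: "x \<in> X" and y: "y \<in> Y" for x y
  proof -
    have qxY: "q x \<in> Y" using qX x .
    have c: "((\<lambda>y. q (?qi y)) has_derivative (\<lambda>h. J (?qi (q x)) *v (Jinv (q x) *v h))) (at (q x) within Y)"
      by (rule has_derivative_in_compose2[of X q "\<lambda>x h. J x *v h" ?qi Y "q x" "\<lambda>h. Jinv (q x) *v h"])
         (use q_deriv qiY qinv_d1 qxY in auto)
    then have c1: "((\<lambda>y. q (?qi y)) has_derivative (\<lambda>h. J x *v (Jinv (q x) *v h))) (at (q x) within Y)"
      using qiq[OF x] by simp
    have c2: "((\<lambda>y. y) has_derivative (\<lambda>h. J x *v (Jinv (q x) *v h))) (at (q x) within Y)"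
      by (rule has_derivative_transform[OF qxY _ c1]) (simp add: qqi)
    have "(\<lambda>h. J x *v (Jinv (q x) *v h)) (y - q x) = (\<lambda>h. h) (y - q x)"
      by (rule deriv_unique_dir[OF c2 has_derivative_ident Y(1) qxY y])
    then show ?thesis by simp
  qed
  have A1t: "transpose (J xt) ** HR yt ** J xt = mat 1" "invertible (transpose (J xt))"
    using A1_facts[of "HR (q xt)" "J xt"] A1[OF xt] yt by auto
  have A1h: "transpose (J x1) ** HR yh ** J x1 = mat 1"
    using A1_facts[of "HR (q x1)" "J x1"] A1[OF x1] by (auto simp: yh_def)
  have ginv_id: "ginv \<bullet> (y - yt) = g \<bullet> (Jinv yt *v (y - yt))" if y: "y \<in> Y" for y
  proof -
    have "y - yt = J xt *v (Jinv yt *v (y - yt))" using tang[OF xt y] yt by simp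
    then have "ginv \<bullet> (y - yt) = (J xt *v (Jinv yt *v (y - yt))) \<bullet> ginv" by (simp add: inner_commute)
    also have "\<dots> = (Jinv yt *v (y - yt)) \<bullet> (transpose (J xt) *v ginv)" by (rule inner_mat)
    also have "transpose (J xt) *v ginv = g"
      using inv_facts(1)[OF A1t(2)] by (simp add: ginv_def matrix_vector_mul_assoc)
    finally show ?thesis by (simp add: inner_commute)
  qed
  have ginv_d: "ginv \<bullet> d = g \<bullet> (Jinv yt *v d)"
  proof -
    have "ginv \<bullet> d = ginv \<bullet> (y1 - yt) - ginv \<bullet> (yh - yt)" by (simp add: d_def inner_diff_right)
    also have "\<dots> = g \<bullet> (Jinv yt *v (y1 - yt)) - g \<bullet> (Jinv yt *v (yh - yt))" using ginv_id y1 yh by simp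
    also have "\<dots> = g \<bullet> (Jinv yt *v d)" by (simp add: d_def matrix_vector_mult_diff_distrib inner_diff_right)
    finally show ?thesis .
  qed
  have T3: "(HR yh *v (y - yh)) \<bullet> (y' - yh) = (P *v (y - yh)) \<bullet> (P *v (y' - yh))" if y: "y \<in> Y" and y': "y' \<in> Y" for y y'
  proof -
    define pu where "pu = P *v (y - yh)"
    define pv where "pv = P *v (y' - yh)"
    have u: "y - yh = J x1 *v pu" using tang[OF x1 y] by (simp add: pu_def P_def yh_def)
    have v: "y' - yh = J x1 *v pv" using tang[OF x1 y'] by (simp add: pv_def P_def yh_def)
    have "(HR yh *v (y - yh)) \<bullet> (y' - yh) = (J x1 *v pv) \<bullet> (HR yh *v (J x1 *v pu))"
      by (simp add: u v inner_commute)
    also have "\<dots> = pv \<bullet> (transpose (J x1) *v (HR yh *v (J x1 *v pu)))" by (rule inner_mat)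
    also have "transpose (J x1) *v (HR yh *v (J x1 *v pu)) = pu"
      using A1h by (simp add: matrix_vector_mul_assoc matrix_mul_assoc)
    finally show ?thesis by (simp add: pu_def pv_def inner_commute)
  qed
  have JLip: "norm (Jinv z *v h - Jinv w *v h) \<le> G * norm (z - w) * norm h" if z: "z \<in> Y" and w: "w \<in> Y" for z w h
  proof -
    have "norm (Jinv z *v h - Jinv w *v h) \<le> (G * norm h) * norm (z - w)"
    proof (rule mvt_bound[OF Y(1), of "\<lambda>z. Jinv z *v h" "\<lambda>z k. D2inv z k *v h"])
      show "((\<lambda>z. Jinv z *v h) has_derivative (\<lambda>k. D2inv y k *v h)) (at y within Y)" if "y \<in> Y" for y
        using bounded_linear.has_derivative[OF bl_mv qinv_d2[OF that]] by simp
      show "norm (D2inv y k *v h) \<le> G * norm h * norm k" if "y \<in> Y" for y k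
        using qinv_d2_bd[OF that, of k h] by (simp add: mult_ac)
    qed (use z w in auto)
    then show ?thesis by (simp add: mult_ac)
  qed
  have HLip: "\<bar>(HR z *v h) \<bullet> l - (HR w *v h) \<bullet> l\<bar> \<le> G * norm (z - w) * norm h * norm l" if z: "z \<in> Y" and w: "w \<in> Y" for z w h l
  proof -
    have bl: "bounded_linear (\<lambda>A::real^'n^'n. (A *v h) \<bullet> l)"
      by (rule bounded_linear_compose[OF bounded_linear_inner_left bl_mv])
    have "norm ((HR z *v h) \<bullet> l - (HR w *v h) \<bullet> l) \<le> (G * norm h * norm l) * norm (z - w)"
    proof (rule mvt_bound[OF Y(1), of "\<lambda>z. (HR z *v h) \<bullet> l" "\<lambda>z k. (TR z k *v h) \<bullet> l"])
      show "((\<lambda>z. (HR z *v h) \<bullet> l) has_derivative (\<lambda>k. (TR y k *v h) \<bullet> l)) (at y within Y)" if "y \<in> Y" for y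
        using bounded_linear.has_derivative[OF bl R_d3[OF that]] by simp
      show "norm ((TR y k *v h) \<bullet> l) \<le> G * norm h * norm l * norm k" if "y \<in> Y" for y k
        using R_d3_bd[OF that, of k h l] by (simp add: mult_ac)
    qed (use z w in auto)
    then show ?thesis by (simp add: mult_ac)
  qed
  define r where "r = ?qi y1 - ?qi yh - P *v d"
  have rb: "norm r \<le> G / 2 * (norm d)\<^sup>2"
    unfolding r_def d_def P_def
    by (rule taylor2[OF Y(1), of ?qi "\<lambda>z h. Jinv z *v h"]) (use qinv_d1 JLip yh y1 in auto)
  define r' where "r' = ?qi yt - ?qi yh - P *v (yt - yh)"
  have r'b: "norm r' \<le> G / 2 * e0\<^sup>2"
    unfolding r'_def e0_def P_def
    by (rule taylor2[OF Y(1), of ?qi "\<lambda>z h. Jinv z *v h"]) (use qinv_d1 JLip yh ytY in auto)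
  define s where "s = gR yt \<bullet> d - gR yh \<bullet> d - (HR yh *v (yt - yh)) \<bullet> d"
  have sb: "\<bar>s\<bar> \<le> (G * norm d) / 2 * e0\<^sup>2"
  proof -
    have "norm ((\<lambda>y. gR y \<bullet> d) yt - (\<lambda>y. gR y \<bullet> d) yh - (\<lambda>h. (HR yh *v h) \<bullet> d) (yt - yh)) \<le> (G * norm d) / 2 * (norm (yt - yh))\<^sup>2"
    proof (rule taylor2[OF Y(1), of "\<lambda>y. gR y \<bullet> d" "\<lambda>z h. (HR z *v h) \<bullet> d"])
      show "((\<lambda>y. gR y \<bullet> d) has_derivative (\<lambda>h. (HR z *v h) \<bullet> d)) (at z within Y)" if "z \<in> Y" for z
        using bounded_linear.has_derivative[OF bounded_linear_inner_left R_hess[OF that]] by simp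
      show "norm ((HR z *v h) \<bullet> d - (HR yh *v h) \<bullet> d) \<le> G * norm d * norm (z - yh) * norm h" if "z \<in> Y" for z h
        using HLip[OF that yh, of h d] by (simp add: mult_ac)
    qed (use yh ytY in auto)
    then show ?thesis by (simp add: s_def e0_def)
  qed
  define Fv where "Fv = (\<lambda>y. \<eta> * (ginv \<bullet> (y - yt)) + bregman R gR y yt)"
  have y1m: "Fv y1 \<le> Fv y" if y: "y \<in> Y" for y
  proof -
    have "\<eta> * (ginv \<bullet> (y1 - yt) + (1 / \<eta>) * bregman R gR y1 yt) \<le> \<eta> * (ginv \<bullet> (y - yt) + (1 / \<eta>) * bregman R gR y yt)"
      using y1_min[OF y] eta unfolding ginv_def by (intro mult_left_mono) auto
    then show ?thesis using eta by (simp add: Fv_def distrib_left)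
  qed
  have M1: "(norm d)\<^sup>2 / 2 \<le> Fv yh - Fv y1"
  proof (rule lim_elem)
    fix u :: real assume u: "0 < u" "u < 1"
    define z where "z = u *\<^sub>R yh + (1 - u) *\<^sub>R y1"
    have zY: "z \<in> Y" unfolding z_def by (rule convexD[OF Y(1) yh y1]) (use u in auto)
    have Rz: "R z \<le> u * R yh + (1 - u) * R y1 - u * (1 - u) / 2 * (norm (yh - y1))\<^sup>2"
      using R_strong yh y1 u unfolding strongly_convex_1_on_def z_def by auto
    have lin: "c \<bullet> (z - yt) = u * (c \<bullet> (yh - yt)) + (1 - u) * (c \<bullet> (y1 - yt))" for c
      by (simp add: z_def inner_diff_right inner_add_right algebra_simps)
    have "Fv z = \<eta> * (u * (ginv \<bullet> (yh - yt)) + (1 - u) * (ginv \<bullet> (y1 - yt))) + R z - R yt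
       - (u * (gR yt \<bullet> (yh - yt)) + (1 - u) * (gR yt \<bullet> (y1 - yt)))"
      unfolding Fv_def bregman_def lin by simp
    also have "\<dots> \<le> u * Fv yh + (1 - u) * Fv y1 - u * (1 - u) / 2 * (norm (yh - y1))\<^sup>2"
      using Rz unfolding Fv_def bregman_def by (simp add: algebra_simps)
    finally have "Fv z \<le> u * Fv yh + (1 - u) * Fv y1 - u * (1 - u) / 2 * (norm (yh - y1))\<^sup>2" .
    moreover have "Fv y1 \<le> Fv z" using y1m[OF zY] .
    ultimately have "u * ((1 - u) * ((norm d)\<^sup>2 / 2)) \<le> u * (Fv yh - Fv y1)"
      by (simp add: d_def norm_minus_commute algebra_simps)
    then show "(1 - u) * ((norm d)\<^sup>2 / 2) \<le> Fv yh - Fv y1" using u by (simp add: mult_le_cancel_left_pos)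
  qed simp
  have GI: "R yh + gR yh \<bullet> (y1 - yh) + (norm (y1 - yh))\<^sup>2 / 2 \<le> R y1"
    by (rule grad_ineq[OF R_strong Y(1) R_grad[OF yh] yh y1])
  have Main1: "(norm d)\<^sup>2 \<le> - (\<eta> * (ginv \<bullet> d)) + (gR yt \<bullet> d - gR yh \<bullet> d)"
  proof -
    have "Fv yh - Fv y1 = - (\<eta> * (ginv \<bullet> d)) + R yh - R y1 + gR yt \<bullet> d"
      unfolding Fv_def bregman_def d_def by (simp add: inner_diff_right algebra_simps)
    then show ?thesis using M1 GI by (simp add: d_def)
  qed
  define nd where "nd = norm d"
  have nd0: "nd \<ge> 0" by (simp add: nd_def)
  have a0: "a \<ge> 0" using eta GF G0 by (simp add: a_def)
  have Pd: "norm (P *v d) \<le> G * nd" using qinv_d1_bd[OF yh] by (simp add: P_def nd_def)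
  have qy1: "?qi y1 - x1 = P *v d + r" using x1yh by (simp add: r_def)
  have qyt: "P *v (yt - yh) = - Dx - r'" using x1yh xtyt by (simp add: r'_def Dx_def)
  have FO1: "0 \<le> W \<bullet> (P *v d) + W \<bullet> r" using FOx[OF qiY[OF y1]] unfolding qy1 by (simp add: inner_add_right)
  have WPd: "W \<bullet> (P *v d) = \<eta> * (g \<bullet> (P *v d)) + Dx \<bullet> (P *v d)" by (simp add: W_def inner_add_left)
  have HT: "(HR yh *v (yt - yh)) \<bullet> d = - (Dx \<bullet> (P *v d)) - r' \<bullet> (P *v d)"
    using T3[OF ytY y1] unfolding qyt by (simp add: d_def inner_diff_left)
  have comb: "nd\<^sup>2 \<le> W \<bullet> r + \<eta> * (g \<bullet> (P *v d - Jinv yt *v d)) - r' \<bullet> (P *v d) + s"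
    using Main1 ginv_d HT FO1 WPd unfolding s_def nd_def by (simp add: inner_diff_right algebra_simps)
  have b1: "W \<bullet> r \<le> a / 2 * nd\<^sup>2"
  proof -
    have "W \<bullet> r \<le> norm W * norm r" by (rule norm_cauchy_schwarz)
    also have "\<dots> \<le> (\<eta> * GF) * (G / 2 * nd\<^sup>2)" using Wn rb eta GF by (intro mult_mono) (auto simp: nd_def)
    finally show ?thesis by (simp add: a_def)
  qed
  have b2: "\<eta> * (g \<bullet> (P *v d - Jinv yt *v d)) \<le> a * a * nd"
  proof -
    have "g \<bullet> (P *v d - Jinv yt *v d) \<le> norm g * norm (P *v d - Jinv yt *v d)" by (rule norm_cauchy_schwarz)
    also have "\<dots> \<le> GF * (G * e0 * nd)"
      using g GF JLip[OF yh ytY, of d] by (intro mult_mono) (auto simp: P_def e0_def nd_def norm_minus_commute)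
    also have "\<dots> \<le> GF * (G * a * nd)"
    proof -
      have "e0 * nd \<le> a * nd" by (rule mult_right_mono[OF e0a nd0])
      from mult_left_mono[OF mult_left_mono[OF this less_imp_le[OF G0]] less_imp_le[OF GF]]
      show ?thesis by (simp add: mult_ac)
    qed
    finally have "\<eta> * (g \<bullet> (P *v d - Jinv yt *v d)) \<le> \<eta> * (GF * (G * a * nd))" using eta by simp
    then show ?thesis by (simp add: a_def mult_ac)
  qed
  have e02: "e0\<^sup>2 \<le> a\<^sup>2" using e0a e00 by (simp add: power_mono)
  have b3: "- (r' \<bullet> (P *v d)) \<le> G\<^sup>2 / 2 * a\<^sup>2 * nd"
  proof -
    have "- (r' \<bullet> (P *v d)) \<le> norm r' * norm (P *v d)" using norm_cauchy_schwarz[of "-r'" "P *v d"] by simp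
    also have "\<dots> \<le> (G / 2 * a\<^sup>2) * (G * nd)"
    proof -
      have "G / 2 * e0\<^sup>2 \<le> G / 2 * a\<^sup>2" by (rule mult_left_mono[OF e02]) (use G0 in simp)
      then have r'a: "norm r' \<le> G / 2 * a\<^sup>2" using r'b by linarith
      have "0 \<le> G / 2 * a\<^sup>2" using G0 by simp
      from mult_mono[OF r'a Pd this norm_ge_zero] show ?thesis .
    qed
    finally show ?thesis by (simp add: power2_eq_square mult_ac)
  qed
  have b4: "s \<le> G / 2 * a\<^sup>2 * nd"
  proof -
    have "s \<le> (G * nd) / 2 * e0\<^sup>2" using sb by (simp add: nd_def)
    also have "\<dots> \<le> (G * nd) / 2 * a\<^sup>2" by (rule mult_left_mono[OF e02]) (use G0 nd0 in simp)
    finally show ?thesis by (simp add: mult_ac)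
  qed
  have key: "nd\<^sup>2 \<le> a / 2 * nd\<^sup>2 + a\<^sup>2 * (1 + G\<^sup>2 / 2 + G / 2) * nd"
  proof -
    have "a\<^sup>2 * (1 + G\<^sup>2 / 2 + G / 2) * nd = a * a * nd + G\<^sup>2 / 2 * a\<^sup>2 * nd + G / 2 * a\<^sup>2 * nd"
      by (simp add: algebra_simps power2_eq_square)
    then show ?thesis using comb b1 b2 b3 b4 by linarith
  qed
  have crude: "nd \<le> 3 * a"
  proof -
    define v where "v = y1 - yt"
    have "Fv y1 \<le> Fv yt" using y1m[OF ytY] .
    then have f1: "\<eta> * (ginv \<bullet> v) + bregman R gR y1 yt \<le> 0" by (simp add: Fv_def bregman_def v_def)
    have "R yt + gR yt \<bullet> (y1 - yt) + (norm (y1 - yt))\<^sup>2 / 2 \<le> R y1"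
      by (rule grad_ineq[OF R_strong Y(1) R_grad[OF ytY] ytY y1])
    then have f2: "(norm v)\<^sup>2 / 2 \<le> bregman R gR y1 yt" by (simp add: bregman_def v_def)
    have "- (g \<bullet> (Jinv yt *v v)) \<le> norm g * norm (Jinv yt *v v)" using norm_cauchy_schwarz[of "-g" "Jinv yt *v v"] by simp
    also have "\<dots> \<le> GF * (G * norm v)" using mult_mono[OF g qinv_d1_bd[OF ytY, of v] _ norm_ge_zero] GF by simp
    finally have f3: "- (ginv \<bullet> v) \<le> GF * (G * norm v)" using ginv_id[OF y1] by (simp add: v_def)
    have "\<eta> * (- (ginv \<bullet> v)) \<le> \<eta> * (GF * (G * norm v))" by (rule mult_left_mono[OF f3]) (use eta in simp)
    then have "(norm v)\<^sup>2 / 2 \<le> a * norm v" using f1 f2 by (simp add: a_def mult_ac)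
    then have sq: "norm v * norm v \<le> norm v * (2 * a)" by (simp add: power2_eq_square algebra_simps)
    have v2: "norm v \<le> 2 * a" using sq_le_cancel[OF norm_ge_zero _ sq] a0 by simp
    have "nd = norm ((y1 - yt) + (yt - yh))" by (simp add: nd_def d_def)
    also have "\<dots> \<le> norm v + e0" unfolding v_def e0_def by (rule norm_triangle_ineq)
    finally show ?thesis using v2 e0a by linarith
  qed
  have target: "G ^ 5 * (5 * GF\<^sup>2 + GF ^ 3 * \<eta>) * \<eta>\<^sup>2 = 5 * G ^ 3 * a\<^sup>2 + G\<^sup>2 * a ^ 3"
    by (simp add: a_def algebra_simps power2_eq_square eval_nat_numeral)
  have G3: "1 \<le> G ^ 3" by (rule one_le_power) (use G_gt in simp)
  have G23: "G\<^sup>2 \<le> G ^ 3" by (rule power_increasing) (use G_gt in simp_all)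
  have G13: "G ^ 1 \<le> G ^ 3" by (rule power_increasing) (use G_gt in simp_all)
  have extra: "0 \<le> G\<^sup>2 * a ^ 3" using a0 by simp
  have "nd \<le> 5 * G ^ 3 * a\<^sup>2"
  proof (cases "a < 1")
    case True
    have "nd\<^sup>2 * (1 - a / 2) \<le> a\<^sup>2 * (1 + G\<^sup>2 / 2 + G / 2) * nd" using key by (simp add: algebra_simps)
    then have k2: "nd * (nd * (1 - a / 2)) \<le> nd * (a\<^sup>2 * (1 + G\<^sup>2 / 2 + G / 2))" by (simp add: power2_eq_square mult_ac)
    have "nd * (1 - a / 2) \<le> a\<^sup>2 * (1 + G\<^sup>2 / 2 + G / 2)"
    proof (cases "nd = 0")
      case True then show ?thesis by (simp add: add_nonneg_nonneg G0 less_imp_le)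
    next
      case False then have "nd > 0" using nd0 by simp
      then show ?thesis using k2 by (simp add: mult_le_cancel_left_pos)
    qed
    moreover have "nd / 2 \<le> nd * (1 - a / 2)"
    proof -
      have "0 \<le> nd * (1 - a)" using True nd0 by simp
      moreover have "nd * (1 - a / 2) = nd / 2 + nd * (1 - a) / 2" by (simp add: field_simps)
      ultimately show ?thesis by linarith
    qed
    ultimately have "nd \<le> a\<^sup>2 * (2 + G\<^sup>2 + G)" by (simp add: algebra_simps)
    also have "\<dots> \<le> a\<^sup>2 * (5 * G ^ 3)"
    proof -
      have "2 + G\<^sup>2 + G \<le> 5 * G ^ 3" using G3 G23 G13 by simp
      then show ?thesis by (rule mult_left_mono) simp
    qed
    finally show ?thesis by (simp add: mult_ac)
  next
    case False
    then have "a \<le> a\<^sup>2" by (simp add: power2_eq_square)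
    moreover have "3 * a\<^sup>2 \<le> 5 * G ^ 3 * a\<^sup>2"
    proof -
      have "3 \<le> 5 * G ^ 3" using G3 by simp
      then show ?thesis by (rule mult_right_mono) simp
    qed
    ultimately show ?thesis using crude by linarith
  qed
  then show ?thesis using target extra by (simp add: nd_def d_def yh_def)
qed
end
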